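(* Let $\mathbf S=\langle S,+,0,\mathscr F\rangle$ be a semilattice with operators. For $\theta\in\operatorname{Con}\mathbf S$ with $0$-class $I$, let $\eta(\theta)$ be the semilattice congruence generated by $I$ (so $x\,\eta(\theta)\,y$ iff $x+i=y+i$ for some $i\in I$) and let $\tau(\theta)$ be the relation with $x\,\tau(\theta)\,y$ iff for all $h\in\mathscr F^\dagger$, $h(x)\in I\Leftrightarrow h(y)\in I$. Then the lattice $\operatorname{Con}\mathbf S$ is partitioned into the intervals $[\eta(\theta),\tau(\theta)]$, each such interval consisting of exactly the congruences having the same $0$-class (which is an $\mathscr F$-closed ideal) as $\theta$.
   Context: A semilattice with operators is a join semilattice $(S,+)$ with least element $0$ together with a set $\mathscr F$ of unary maps preserving $+$ and $0$; congruences are equivalence relations compatible with $+$ and all $f\in\mathscr F$. $\mathscr F^\dagger$ denotes the monoid generated by $\mathscr F$ under composition, including the identity map. *)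

theory Defs
  imports Main
begin

definition sl_ops :: "'a set \<Rightarrow> ('a \<Rightarrow> 'a \<Rightarrow> 'a) \<Rightarrow> 'a \<Rightarrow> ('a \<Rightarrow> 'a) set \<Rightarrow> bool" where
  "sl_ops S join zero F \<longleftrightarrow>
     zero \<in> S \<and>
     (\<forall>x\<in>S. \<forall>y\<in>S. join x y \<in> S) \<and>
     (\<forall>x\<in>S. \<forall>y\<in>S. \<forall>z\<in>S. join (join x y) z = join x (join y z)) \<and>
     (\<forall>x\<in>S. \<forall>y\<in>S. join x y = join y x) \<and>
     (\<forall>x\<in>S. join x x = x) \<and>
     (\<forall>x\<in>S. join x zero = x) \<and>
     (\<forall>f\<in>F. (\<forall>x\<in>S. f x \<in> S) \<and> f zero = zero \<and>
        (\<forall>x\<in>S. \<forall>y\<in>S. f (join x y) = join (f x) (f y)))"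

inductive_set Fdag :: "('a \<Rightarrow> 'a) set \<Rightarrow> ('a \<Rightarrow> 'a) set" for F where
  Fdag_id: "id \<in> Fdag F"
| Fdag_comp: "f \<in> F \<Longrightarrow> h \<in> Fdag F \<Longrightarrow> f \<circ> h \<in> Fdag F"

definition Con :: "'a set \<Rightarrow> ('a \<Rightarrow> 'a \<Rightarrow> 'a) \<Rightarrow> ('a \<Rightarrow> 'a) set \<Rightarrow> 'a rel set" where
  "Con S join F = {\<theta>. equiv S \<theta> \<and>
     (\<forall>x y u v. (x, y) \<in> \<theta> \<longrightarrow> (u, v) \<in> \<theta> \<longrightarrow> (join x u, join y v) \<in> \<theta>) \<and>
     (\<forall>f\<in>F. \<forall>x y. (x, y) \<in> \<theta> \<longrightarrow> (f x, f y) \<in> \<theta>)}"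

definition zero_class :: "'a set \<Rightarrow> 'a \<Rightarrow> 'a rel \<Rightarrow> 'a set" where
  "zero_class S zero \<theta> = {x \<in> S. (x, zero) \<in> \<theta>}"

definition sl_ideal :: "'a set \<Rightarrow> ('a \<Rightarrow> 'a \<Rightarrow> 'a) \<Rightarrow> 'a set \<Rightarrow> bool" where
  "sl_ideal S join I \<longleftrightarrow> I \<subseteq> S \<and> I \<noteq> {} \<and>
     (\<forall>x\<in>I. \<forall>y\<in>I. join x y \<in> I) \<and>
     (\<forall>x\<in>S. \<forall>y\<in>I. join x y = y \<longrightarrow> x \<in> I)"

definition F_closed :: "('a \<Rightarrow> 'a) set \<Rightarrow> 'a set \<Rightarrow> bool" where
  "F_closed F I \<longleftrightarrow> (\<forall>f\<in>F. \<forall>x\<in>I. f x \<in> I)"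

definition eta :: "'a set \<Rightarrow> ('a \<Rightarrow> 'a \<Rightarrow> 'a) \<Rightarrow> 'a \<Rightarrow> 'a rel \<Rightarrow> 'a rel" where
  "eta S join zero \<theta> =
     {(x, y). x \<in> S \<and> y \<in> S \<and> (\<exists>i \<in> zero_class S zero \<theta>. join x i = join y i)}"

definition tau :: "'a set \<Rightarrow> 'a \<Rightarrow> ('a \<Rightarrow> 'a) set \<Rightarrow> 'a rel \<Rightarrow> 'a rel" where
  "tau S zero F \<theta> =
     {(x, y). x \<in> S \<and> y \<in> S \<and>
        (\<forall>h \<in> Fdag F. h x \<in> zero_class S zero \<theta> \<longleftrightarrow> h y \<in> zero_class S zero \<theta>)}"

end

theory Submission
  imports Defs
begin

lemma Fdag_props:
  assumes A: "sl_ops S join zero F" and h: "h \<in> Fdag F"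
  shows "(\<forall>x\<in>S. h x \<in> S) \<and> h zero = zero \<and> (\<forall>x\<in>S. \<forall>y\<in>S. h (join x y) = join (h x) (h y))"
  using h
proof induction
  case Fdag_id then show ?case by simp
next
  case (Fdag_comp f h)
  have fF: "(\<forall>x\<in>S. f x \<in> S) \<and> f zero = zero \<and> (\<forall>x\<in>S. \<forall>y\<in>S. f (join x y) = join (f x) (f y))"
    using A Fdag_comp.hyps(1) unfolding sl_ops_def by blast
  then show ?case using Fdag_comp.IH by (simp only: comp_apply) simp
qed

lemma Fdag_compR:
  assumes h: "h \<in> Fdag F" and f: "f \<in> F"
  shows "h \<circ> f \<in> Fdag F"
  using h
proof induction
  case Fdag_id
  have "f \<circ> id \<in> Fdag F" by (rule Fdag.Fdag_comp[OF f Fdag.Fdag_id])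
  then show ?case by simp
next
  case (Fdag_comp g h)
  have "g \<circ> (h \<circ> f) \<in> Fdag F" by (rule Fdag.Fdag_comp[OF Fdag_comp.hyps(1) Fdag_comp.IH])
  then show ?case by (simp add: comp_assoc del: comp_apply)
qed

lemma Con_Fdag:
  assumes t: "\<theta> \<in> Con S join F" and h: "h \<in> Fdag F"
  shows "(x,y) \<in> \<theta> \<Longrightarrow> (h x, h y) \<in> \<theta>"
  using h
proof (induction arbitrary: x y)
  case Fdag_id then show ?case by simp
next
  case (Fdag_comp f h)
  then show ?case using t unfolding Con_def by auto
qed

lemma Con_sub: "\<theta> \<in> Con S join F \<Longrightarrow> (x,y) \<in> \<theta> \<Longrightarrow> x \<in> S \<and> y \<in> S"
  unfolding Con_def equiv_def refl_on_def by blast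

lemma Con_refl: "\<theta> \<in> Con S join F \<Longrightarrow> x \<in> S \<Longrightarrow> (x,x) \<in> \<theta>"
  unfolding Con_def equiv_def refl_on_def by blast

lemma Con_sym: "\<theta> \<in> Con S join F \<Longrightarrow> (x,y) \<in> \<theta> \<Longrightarrow> (y,x) \<in> \<theta>"
  unfolding Con_def equiv_def sym_def by blast

lemma Con_trans: "\<theta> \<in> Con S join F \<Longrightarrow> (x,y) \<in> \<theta> \<Longrightarrow> (y,z) \<in> \<theta> \<Longrightarrow> (x,z) \<in> \<theta>"
  unfolding Con_def equiv_def trans_def by blast

lemma Con_join: "\<theta> \<in> Con S join F \<Longrightarrow> (x,y) \<in> \<theta> \<Longrightarrow> (u,v) \<in> \<theta> \<Longrightarrow> (join x u, join y v) \<in> \<theta>"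
  unfolding Con_def by blast

lemma Con_F: "\<theta> \<in> Con S join F \<Longrightarrow> f \<in> F \<Longrightarrow> (x,y) \<in> \<theta> \<Longrightarrow> (f x, f y) \<in> \<theta>"
  unfolding Con_def by blast

lemma zc_join:
  assumes A: "sl_ops S join zero F" and t: "\<theta> \<in> Con S join F" and a: "a \<in> S" and b: "b \<in> S"
  shows "join a b \<in> zero_class S zero \<theta> \<longleftrightarrow> a \<in> zero_class S zero \<theta> \<and> b \<in> zero_class S zero \<theta>"
proof
  assume ab: "join a b \<in> zero_class S zero \<theta>"
  then have abz: "(join a b, zero) \<in> \<theta>" and abS: "join a b \<in> S" unfolding zero_class_def by auto
  have z: "zero \<in> S" using A unfolding sl_ops_def by blast
  have "(join a zero, join a (join a b)) \<in> \<theta>"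
    by (rule Con_join[OF t Con_refl[OF t a] Con_sym[OF t abz]])
  moreover have "join a zero = a" using A a unfolding sl_ops_def by blast
  moreover have "join a (join a b) = join a b" using A a b unfolding sl_ops_def by metis
  ultimately have az: "(a, zero) \<in> \<theta>" using Con_trans[OF t _ abz] by metis
  have "(join b zero, join b (join a b)) \<in> \<theta>"
    by (rule Con_join[OF t Con_refl[OF t b] Con_sym[OF t abz]])
  moreover have "join b zero = b" using A b unfolding sl_ops_def by blast
  moreover have "join b (join a b) = join a b" using A a b unfolding sl_ops_def by metis
  ultimately have bz: "(b, zero) \<in> \<theta>" using Con_trans[OF t _ abz] by metis
  show "a \<in> zero_class S zero \<theta> \<and> b \<in> zero_class S zero \<theta>"
    using az bz a b unfolding zero_class_def by auto
next
  assume "a \<in> zero_class S zero \<theta> \<and> b \<in> zero_class S zero \<theta>"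
  then have az: "(a, zero) \<in> \<theta>" and bz: "(b,zero) \<in> \<theta>" unfolding zero_class_def by auto
  have "(join a b, join zero zero) \<in> \<theta>" by (rule Con_join[OF t az bz])
  moreover have "join zero zero = zero" using A unfolding sl_ops_def by blast
  moreover have "join a b \<in> S" using A a b unfolding sl_ops_def by blast
  ultimately show "join a b \<in> zero_class S zero \<theta>" unfolding zero_class_def by auto
qed

lemma eta_Con:
  assumes A: "sl_ops S join zero F" and t: "\<theta> \<in> Con S join F"
  shows "eta S join zero \<theta> \<in> Con S join F"
proof -
  let ?I = "zero_class S zero \<theta>"
  let ?E = "eta S join zero \<theta>"
  have z: "zero \<in> S" and jS: "\<forall>x\<in>S. \<forall>y\<in>S. join x y \<in> S"
    and assoc: "\<forall>x\<in>S. \<forall>y\<in>S. \<forall>z\<in>S. join (join x y) z = join x (join y z)"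
    and comm: "\<forall>x\<in>S. \<forall>y\<in>S. join x y = join y x"
    and idem: "\<forall>x\<in>S. join x x = x" and zr: "\<forall>x\<in>S. join x zero = x"
    and FF: "\<forall>f\<in>F. (\<forall>x\<in>S. f x \<in> S) \<and> f zero = zero \<and>
        (\<forall>x\<in>S. \<forall>y\<in>S. f (join x y) = join (f x) (f y))"
    using A unfolding sl_ops_def by blast+
  have IS: "?I \<subseteq> S" unfolding zero_class_def by auto
  have zI: "zero \<in> ?I" using z Con_refl[OF t z] unfolding zero_class_def by auto
  have IJ: "\<And>i j. i \<in> ?I \<Longrightarrow> j \<in> ?I \<Longrightarrow> join i j \<in> ?I"
    using zc_join[OF A t] IS by blast
  have swap: "\<And>x u i j. x\<in>S \<Longrightarrow> u\<in>S \<Longrightarrow> i\<in>S \<Longrightarrow> j\<in>S \<Longrightarrow>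
      join (join x u) (join i j) = join (join x i) (join u j)"
    using assoc comm jS by metis
  have eq: "equiv S ?E"
  proof (rule equivI)
    show "?E \<subseteq> S \<times> S" unfolding eta_def by auto
    show "refl_on S ?E" unfolding refl_on_def eta_def using zI by auto
    show "sym ?E" unfolding sym_def eta_def by (auto dest: sym)
    show "trans ?E" unfolding trans_def
    proof (intro allI impI)
      fix x y w assume "(x,y) \<in> ?E" "(y,w) \<in> ?E"
      then obtain i j where xyw: "x\<in>S" "y\<in>S" "w\<in>S" and i: "i\<in>?I" "join x i = join y i"
        and j: "j \<in> ?I" "join y j = join w j" unfolding eta_def by auto
      have iS: "i\<in>S" "j\<in>S" using i j IS by auto
      have "join x (join i j) = join (join x i) j" using assoc xyw iS by metis
      also have "\<dots> = join (join y i) j" using i by simp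
      also have "\<dots> = join (join y j) i" using assoc comm xyw iS by metis
      also have "\<dots> = join (join w j) i" using j by simp
      also have "\<dots> = join w (join i j)" using assoc comm xyw iS by metis
      finally show "(x,w) \<in> ?E" unfolding eta_def using xyw IJ[OF i(1) j(1)] by auto
    qed
  qed
  have cj: "\<forall>x y u v. (x, y) \<in> ?E \<longrightarrow> (u, v) \<in> ?E \<longrightarrow> (join x u, join y v) \<in> ?E"
  proof (intro allI impI)
    fix x y u v assume "(x,y) \<in> ?E" "(u,v) \<in> ?E"
    then obtain i j where S4: "x\<in>S" "y\<in>S" "u\<in>S" "v\<in>S" and i: "i\<in>?I" "join x i = join y i"
        and j: "j \<in> ?I" "join u j = join v j" unfolding eta_def by auto
    have iS: "i\<in>S" "j\<in>S" using i j IS by auto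
    have "join (join x u) (join i j) = join (join y v) (join i j)"
      using swap[OF S4(1,3) iS] swap[OF S4(2,4) iS] i j by simp
    then show "(join x u, join y v) \<in> ?E" unfolding eta_def using S4 jS IJ[OF i(1) j(1)] by auto
  qed
  have cf: "\<forall>f\<in>F. \<forall>x y. (x, y) \<in> ?E \<longrightarrow> (f x, f y) \<in> ?E"
  proof (intro ballI allI impI)
    fix f x y assume f: "f \<in> F" and "(x,y) \<in> ?E"
    then obtain i where S2: "x\<in>S" "y\<in>S" and i: "i\<in>?I" "join x i = join y i" unfolding eta_def by auto
    have iS: "i \<in> S" using i IS by auto
    have fi: "f i \<in> ?I" using Con_F[OF t f, of i zero] i FF f unfolding zero_class_def by auto
    have "join (f x) (f i) = join (f y) (f i)" using FF f S2 iS i(2) by metis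
    then show "(f x, f y) \<in> ?E" unfolding eta_def using fi FF f S2 by auto
  qed
  show ?thesis unfolding Con_def using eq cj cf by blast
qed

lemma tau_Con:
  assumes A: "sl_ops S join zero F" and t: "\<theta> \<in> Con S join F"
  shows "tau S zero F \<theta> \<in> Con S join F"
proof -
  let ?I = "zero_class S zero \<theta>"
  let ?T = "tau S zero F \<theta>"
  have jS: "\<forall>x\<in>S. \<forall>y\<in>S. join x y \<in> S"
    and FF: "\<forall>f\<in>F. (\<forall>x\<in>S. f x \<in> S)"
    using A unfolding sl_ops_def by blast+
  have eq: "equiv S ?T"
  proof (rule equivI)
    show "?T \<subseteq> S \<times> S" unfolding tau_def by auto
    show "refl_on S ?T" unfolding refl_on_def tau_def by auto
    show "sym ?T" unfolding sym_def tau_def by auto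
    show "trans ?T" unfolding trans_def tau_def by auto
  qed
  have cj: "\<forall>x y u v. (x, y) \<in> ?T \<longrightarrow> (u, v) \<in> ?T \<longrightarrow> (join x u, join y v) \<in> ?T"
  proof (intro allI impI)
    fix x y u v assume xy: "(x,y) \<in> ?T" and uv: "(u,v) \<in> ?T"
    then have S4: "x\<in>S" "y\<in>S" "u\<in>S" "v\<in>S" unfolding tau_def by auto
    have "\<forall>h\<in>Fdag F. h (join x u) \<in> ?I \<longleftrightarrow> h (join y v) \<in> ?I"
    proof
      fix h assume h: "h \<in> Fdag F"
      note P = Fdag_props[OF A h]
      have "h (join x u) \<in> ?I \<longleftrightarrow> h x \<in> ?I \<and> h u \<in> ?I"
        using P S4 zc_join[OF A t] by metis
      also have "\<dots> \<longleftrightarrow> h y \<in> ?I \<and> h v \<in> ?I" using xy uv h unfolding tau_def by auto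
      also have "\<dots> \<longleftrightarrow> h (join y v) \<in> ?I"
        using P S4 zc_join[OF A t] by metis
      finally show "h (join x u) \<in> ?I \<longleftrightarrow> h (join y v) \<in> ?I" .
    qed
    then show "(join x u, join y v) \<in> ?T" unfolding tau_def using S4 jS by auto
  qed
  have cf: "\<forall>f\<in>F. \<forall>x y. (x, y) \<in> ?T \<longrightarrow> (f x, f y) \<in> ?T"
  proof (intro ballI allI impI)
    fix f x y assume f: "f \<in> F" and xy: "(x,y) \<in> ?T"
    have "\<forall>h\<in>Fdag F. h (f x) \<in> ?I \<longleftrightarrow> h (f y) \<in> ?I"
    proof
      fix h assume h: "h \<in> Fdag F"
      have "h \<circ> f \<in> Fdag F" by (rule Fdag_compR[OF h f])
      then show "h (f x) \<in> ?I \<longleftrightarrow> h (f y) \<in> ?I" using xy unfolding tau_def by auto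
    qed
    then show "(f x, f y) \<in> ?T" unfolding tau_def using xy FF f unfolding tau_def by auto
  qed
  show ?thesis unfolding Con_def using eq cj cf by blast
qed

lemma eta_sub:
  assumes A: "sl_ops S join zero F" and t: "\<theta> \<in> Con S join F"
  shows "eta S join zero \<theta> \<subseteq> \<theta>"
proof
  fix p assume "p \<in> eta S join zero \<theta>"
  then obtain x y i where p: "p = (x,y)" and S2: "x\<in>S" "y\<in>S" and i: "i \<in> S" "(i,zero) \<in> \<theta>"
    "join x i = join y i" unfolding eta_def zero_class_def by auto
  have zr: "\<forall>x\<in>S. join x zero = x" using A unfolding sl_ops_def by blast
  have "(join x i, join x zero) \<in> \<theta>" by (rule Con_join[OF t Con_refl[OF t S2(1)] i(2)])
  then have 1: "(join x i, x) \<in> \<theta>" using zr S2 by simp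
  have "(join y i, join y zero) \<in> \<theta>" by (rule Con_join[OF t Con_refl[OF t S2(2)] i(2)])
  then have 2: "(join y i, y) \<in> \<theta>" using zr S2 by simp
  have "(x, join y i) \<in> \<theta>" using Con_sym[OF t 1] i(3) by simp
  then show "p \<in> \<theta>" using p Con_trans[OF t _ 2] by simp
qed

lemma sub_tau:
  assumes A: "sl_ops S join zero F" and t: "\<theta> \<in> Con S join F"
  shows "\<theta> \<subseteq> tau S zero F \<theta>"
proof
  fix p assume p: "p \<in> \<theta>"
  then obtain x y where xy: "p = (x,y)" "(x,y) \<in> \<theta>" by (cases p) auto
  have S2: "x \<in> S" "y \<in> S" using Con_sub[OF t xy(2)] by auto
  have "\<forall>h\<in>Fdag F. h x \<in> zero_class S zero \<theta> \<longleftrightarrow> h y \<in> zero_class S zero \<theta>"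
  proof
    fix h assume h: "h \<in> Fdag F"
    have hh: "(h x, h y) \<in> \<theta>" by (rule Con_Fdag[OF t h xy(2)])
    show "h x \<in> zero_class S zero \<theta> \<longleftrightarrow> h y \<in> zero_class S zero \<theta>"
      unfolding zero_class_def using hh Con_sub[OF t hh] Con_trans[OF t] Con_sym[OF t] by blast
  qed
  then show "p \<in> tau S zero F \<theta>" unfolding tau_def using xy S2 by auto
qed

lemma zc_ideal:
  assumes A: "sl_ops S join zero F" and t: "\<theta> \<in> Con S join F"
  shows "sl_ideal S join (zero_class S zero \<theta>) \<and> F_closed F (zero_class S zero \<theta>)"
proof -
  let ?I = "zero_class S zero \<theta>"
  have z: "zero \<in> S" using A unfolding sl_ops_def by blast
  have IS: "?I \<subseteq> S" unfolding zero_class_def by auto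
  have zI: "zero \<in> ?I" using z Con_refl[OF t z] unfolding zero_class_def by auto
  have IJ: "\<forall>i\<in>?I. \<forall>j\<in>?I. join i j \<in> ?I"
    using zc_join[OF A t] IS by blast
  have dn: "\<forall>x\<in>S. \<forall>y\<in>?I. join x y = y \<longrightarrow> x \<in> ?I"
  proof (intro ballI impI)
    fix x y assume x: "x \<in> S" and y: "y \<in> ?I" and e: "join x y = y"
    have "y \<in> S" using y IS by auto
    then have "join x y \<in> ?I \<longleftrightarrow> x \<in> ?I \<and> y \<in> ?I" by (rule zc_join[OF A t x])
    then show "x \<in> ?I" using y e by argo
  qed
  have fc: "F_closed F ?I" unfolding F_closed_def
  proof (intro ballI)
    fix f x assume f: "f \<in> F" and x: "x \<in> ?I"
    have "(f x, f zero) \<in> \<theta>" using Con_F[OF t f] x unfolding zero_class_def by auto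
    moreover have "f zero = zero \<and> (\<forall>x\<in>S. f x \<in> S)" using A f unfolding sl_ops_def by blast
    moreover have "x \<in> S" using x IS by auto
    ultimately show "f x \<in> ?I" unfolding zero_class_def by auto
  qed
  have "?I \<noteq> {}" using zI by auto
  then have "sl_ideal S join ?I" unfolding sl_ideal_def using IS IJ dn by (intro conjI)
  then show ?thesis using fc by (rule conjI)
qed

lemma eta_zc: "zero_class S zero \<psi> = zero_class S zero \<theta> \<Longrightarrow> eta S join zero \<psi> = eta S join zero \<theta>"
  unfolding eta_def by simp

lemma tau_zc: "zero_class S zero \<psi> = zero_class S zero \<theta> \<Longrightarrow> tau S zero F \<psi> = tau S zero F \<theta>"
  unfolding tau_def by simp

lemma interval_iff:
  assumes A: "sl_ops S join zero F" and t: "\<theta> \<in> Con S join F" and p: "\<psi> \<in> Con S join F"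
  shows "(eta S join zero \<theta> \<subseteq> \<psi> \<and> \<psi> \<subseteq> tau S zero F \<theta>) \<longleftrightarrow>
               zero_class S zero \<psi> = zero_class S zero \<theta>"
proof
  assume H: "eta S join zero \<theta> \<subseteq> \<psi> \<and> \<psi> \<subseteq> tau S zero F \<theta>"
  have z: "zero \<in> S" and idem: "\<forall>x\<in>S. join x x = x" and comm: "\<forall>x\<in>S. \<forall>y\<in>S. join x y = join y x"
    and zr: "\<forall>x\<in>S. join x zero = x"
    using A unfolding sl_ops_def by blast+
  have zI: "zero \<in> zero_class S zero \<theta>" using z Con_refl[OF t z] unfolding zero_class_def by auto
  show "zero_class S zero \<psi> = zero_class S zero \<theta>"
  proof
    show "zero_class S zero \<psi> \<subseteq> zero_class S zero \<theta>"
    proof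
      fix x assume "x \<in> zero_class S zero \<psi>"
      then have "(x, zero) \<in> tau S zero F \<theta>" using H unfolding zero_class_def by auto
      then show "x \<in> zero_class S zero \<theta>" unfolding tau_def using Fdag.Fdag_id[of F] zI by auto
    qed
    show "zero_class S zero \<theta> \<subseteq> zero_class S zero \<psi>"
    proof
      fix x assume x: "x \<in> zero_class S zero \<theta>"
      then have xS: "x \<in> S" unfolding zero_class_def by auto
      have "join zero x = join x zero" using comm xS z by blast
      then have "join x x = join zero x" using idem zr xS by simp
      then have "(x, zero) \<in> eta S join zero \<theta>" unfolding eta_def using x xS z by auto
      then show "x \<in> zero_class S zero \<psi>" using H xS unfolding zero_class_def by auto
    qed
  qed
next
  assume e: "zero_class S zero \<psi> = zero_class S zero \<theta>"
  show "eta S join zero \<theta> \<subseteq> \<psi> \<and> \<psi> \<subseteq> tau S zero F \<theta>"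
    using eta_sub[OF A p] sub_tau[OF A p] eta_zc[OF e, of join] tau_zc[OF e, of F] by simp
qed

theorem theorem5p2:
  fixes S :: "'a set" and join :: "'a \<Rightarrow> 'a \<Rightarrow> 'a" and zero :: 'a
    and F :: "('a \<Rightarrow> 'a) set"
  assumes "sl_ops S join zero F"
  shows "(\<forall>\<theta> \<in> Con S join F.
            eta S join zero \<theta> \<in> Con S join F \<and> tau S zero F \<theta> \<in> Con S join F \<and>
            eta S join zero \<theta> \<subseteq> \<theta> \<and> \<theta> \<subseteq> tau S zero F \<theta> \<and>
            sl_ideal S join (zero_class S zero \<theta>) \<and> F_closed F (zero_class S zero \<theta>) \<and>
            (\<forall>\<psi> \<in> Con S join F.
               (eta S join zero \<theta> \<subseteq> \<psi> \<and> \<psi> \<subseteq> tau S zero F \<theta>) \<longleftrightarrow>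
               zero_class S zero \<psi> = zero_class S zero \<theta>))
       \<and> (\<forall>\<theta> \<in> Con S join F. \<forall>\<theta>' \<in> Con S join F.
            (eta S join zero \<theta> = eta S join zero \<theta>' \<and> tau S zero F \<theta> = tau S zero F \<theta>')
            \<or> {\<psi> \<in> Con S join F. eta S join zero \<theta> \<subseteq> \<psi> \<and> \<psi> \<subseteq> tau S zero F \<theta>}
              \<inter> {\<psi> \<in> Con S join F. eta S join zero \<theta>' \<subseteq> \<psi> \<and> \<psi> \<subseteq> tau S zero F \<theta>'} = {})"
proof (intro conjI ballI)
  fix \<theta> assume t: "\<theta> \<in> Con S join F"
  show "eta S join zero \<theta> \<in> Con S join F" by (rule eta_Con[OF assms t])
  show "tau S zero F \<theta> \<in> Con S join F" by (rule tau_Con[OF assms t])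
  show "eta S join zero \<theta> \<subseteq> \<theta>" by (rule eta_sub[OF assms t])
  show "\<theta> \<subseteq> tau S zero F \<theta>" by (rule sub_tau[OF assms t])
  show "sl_ideal S join (zero_class S zero \<theta>)" using zc_ideal[OF assms t] by blast
  show "F_closed F (zero_class S zero \<theta>)" using zc_ideal[OF assms t] by blast
  fix \<psi> assume p: "\<psi> \<in> Con S join F"
  show "(eta S join zero \<theta> \<subseteq> \<psi> \<and> \<psi> \<subseteq> tau S zero F \<theta>) \<longleftrightarrow>
               zero_class S zero \<psi> = zero_class S zero \<theta>" by (rule interval_iff[OF assms t p])
next
  fix \<theta> \<theta>' assume t: "\<theta> \<in> Con S join F" and t': "\<theta>' \<in> Con S join F"
  show "(eta S join zero \<theta> = eta S join zero \<theta>' \<and> tau S zero F \<theta> = tau S zero F \<theta>')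
            \<or> {\<psi> \<in> Con S join F. eta S join zero \<theta> \<subseteq> \<psi> \<and> \<psi> \<subseteq> tau S zero F \<theta>}
              \<inter> {\<psi> \<in> Con S join F. eta S join zero \<theta>' \<subseteq> \<psi> \<and> \<psi> \<subseteq> tau S zero F \<theta>'} = {}"
  proof (cases "zero_class S zero \<theta> = zero_class S zero \<theta>'")
    case True
    then show ?thesis using eta_zc[OF True, of join] tau_zc[OF True, of F] by simp
  next
    case False
    have "\<not> (\<psi> \<in> Con S join F \<and> eta S join zero \<theta> \<subseteq> \<psi> \<and> \<psi> \<subseteq> tau S zero F \<theta> \<and>
              eta S join zero \<theta>' \<subseteq> \<psi> \<and> \<psi> \<subseteq> tau S zero F \<theta>')" for \<psi>
      using interval_iff[OF assms t, of \<psi>] interval_iff[OF assms t', of \<psi>] False by auto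
    then show ?thesis by blast
  qed
qed

end
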